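(* Let $N\ge 4$ be a multiple of $4$ and $0\le r_1<\dots<r_N\le 1$. Let $h_1^*$ be the 2-factor of $\mathcal K_N$ consisting of the $N/4$ four-cycles $(r_a,r_{a+N/2},r_{a+1},r_{a+N/2+1})$ for $a=1,3,5,\dots,\frac N2-1$, and let $h_2^*$ be the 2-factor consisting of the $N/4$ four-cycles $(r_a,r_{a+N/2},r_{a-1},r_{a+N/2-1})$ for $a=1,3,\dots,\frac N2-1$, where indices are taken mod $N$ in $\{1,\dots,N\}$ (so for $a=1$ the cycle is $(r_1,r_{N/2+1},r_N,r_{N/2})$). Then $h_1^*$ and $h_2^*$ are exactly the 2-factors of $\mathcal K_N$ having the maximum number of crossing pairs of edges.
   Context: A 2-factor of $\mathcal K_N$ is a spanning subgraph in which each vertex has degree $2$, i.e. a covering of all vertices by vertex-disjoint cycles of length at least $3$; a cycle written $(v_1,\dots,v_m)$ has edges $\{v_i,v_{i+1}\}$ and $\{v_m,v_1\}$. Two edges $\{r_i,r_j\}$, $\{r_k,r_\ell\}$ with $i<j$, $k<\ell$ cross if $i<k<j<\ell$ or $k<i<\ell<j$; the number of crossings of a 2-factor is the number of unordered pairs of its edges that cross. *)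

theory Defs
  imports Complex_Main
begin

text \<open>Vertex r_i of K_N is represented by its index i in {1..N}; an edge is a
 2-element set of indices. Since r_1 < ... < r_N, crossings (defined via indices)
 depend only on the indices.\<close>

definition two_factor :: "nat \<Rightarrow> nat set set \<Rightarrow> bool" where
  "two_factor N F \<longleftrightarrow>
     (\<forall>e\<in>F. e \<subseteq> {1..N} \<and> card e = 2) \<and>
     (\<forall>v\<in>{1..N}. card {e\<in>F. v \<in> e} = 2)"

definition cross :: "nat set \<Rightarrow> nat set \<Rightarrow> bool" where
  "cross e f \<longleftrightarrow>
     (let i = Min e; j = Max e; k = Min f; l = Max f in
        (i < k \<and> k < j \<and> j < l) \<or> (k < i \<and> i < l \<and> l < j))"

definition crossings :: "nat set set \<Rightarrow> nat" where
  "crossings F = card {{e, f} | e f. e \<in> F \<and> f \<in> F \<and> cross e f}"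

definition cycle_edges :: "nat list \<Rightarrow> nat set set" where
  "cycle_edges vs = {{vs ! i, vs ! ((i + 1) mod length vs)} | i. i < length vs}"

definition wrap :: "nat \<Rightarrow> int \<Rightarrow> nat" where
  "wrap N k = nat ((k - 1) mod int N) + 1"

definition h1 :: "nat \<Rightarrow> nat set set" where
  "h1 N = (\<Union>a\<in>{a. odd a \<and> 1 \<le> a \<and> a \<le> N div 2 - 1}.
     cycle_edges [wrap N (int a), wrap N (int a + int (N div 2)),
                  wrap N (int a + 1), wrap N (int a + int (N div 2) + 1)])"

definition h2 :: "nat \<Rightarrow> nat set set" where
  "h2 N = (\<Union>a\<in>{a. odd a \<and> 1 \<le> a \<and> a \<le> N div 2 - 1}.
     cycle_edges [wrap N (int a), wrap N (int a + int (N div 2)),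
                  wrap N (int a - 1), wrap N (int a + int (N div 2) - 1)])"

end

theory Submission
  imports Defs
begin



lemma cross_sym: "cross e f = cross f e"
  unfolding cross_def Let_def by auto

lemma cross_irrefl: "\<not> cross e e"
  unfolding cross_def Let_def by auto

lemma cross2:
  fixes x y z w :: nat
  assumes "x < y" "z < w"
  shows "cross {x,y} {z,w} \<longleftrightarrow> (x<z \<and> z<y \<and> y<w) \<or> (z<x \<and> x<w \<and> w<y)"
  using assms unfolding cross_def Let_def by (simp add: min_def max_def)

lemma card2E:
  fixes e :: "nat set"
  assumes "card e = 2"
  obtains x y where "x < y" "e = {x,y}"
proof -
  from assms obtain x y where "e = {x,y}" "x \<noteq> y" by (auto simp: card_2_iff)
  then show ?thesis using that by (metis insert_commute linorder_neqE_nat)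
qed

lemma tf_finite: "two_factor N F \<Longrightarrow> finite F"
  unfolding two_factor_def
  by (rule finite_subset[of _ "Pow {1..N}"]) auto

lemma tf_sum:
  assumes tf: "two_factor N F" and U: "U \<subseteq> {1..N}"
  shows "(\<Sum>f\<in>F. card (f \<inter> U)) = 2 * card U"
proof -
  have fin: "finite F" using tf_finite[OF tf] .
  have fU: "finite U" using U finite_subset by blast
  have "(\<Sum>f\<in>F. card (f \<inter> U)) = (\<Sum>f\<in>F. \<Sum>v\<in>U. if v \<in> f then 1 else 0)"
  proof (rule sum.cong)
    fix f assume "f \<in> F"
    have "card (f \<inter> U) = card (U \<inter> f)" by (simp add: Int_commute)
    also have "\<dots> = (\<Sum>v\<in>U \<inter> f. 1)" by simp
    also have "\<dots> = (\<Sum>v\<in>U. if v \<in> f then 1 else 0)"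
      using sum.inter_restrict[OF fU, of "\<lambda>_. (1::nat)" f] by simp
    finally show "card (f \<inter> U) = (\<Sum>v\<in>U. if v \<in> f then 1 else 0)" .
  qed simp
  also have "\<dots> = (\<Sum>v\<in>U. \<Sum>f\<in>F. if v \<in> f then 1 else 0)" by (rule sum.swap)
  also have "\<dots> = (\<Sum>v\<in>U. card {f\<in>F. v \<in> f})"
  proof (rule sum.cong)
    fix v assume "v \<in> U"
    show "(\<Sum>f\<in>F. if v \<in> f then 1 else 0) = card {f\<in>F. v \<in> f}"
      using fin by (simp add: sum.inter_filter[symmetric])
  qed simp
  also have "\<dots> = (\<Sum>v\<in>U. 2)"
    using tf U unfolding two_factor_def by (intro sum.cong) auto
  finally show ?thesis by simp
qed

lemma tf_card:
  assumes tf: "two_factor N F" shows "card F = N"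
proof -
  have "(\<Sum>f\<in>F. card (f \<inter> {1..N})) = (\<Sum>f\<in>F. 2)"
    using tf unfolding two_factor_def by (intro sum.cong) (auto simp: Int_absorb2)
  with tf_sum[OF tf, of "{1..N}"] show ?thesis by simp
qed


definition NC :: "nat set set \<Rightarrow> nat set \<Rightarrow> nat set set" where
  "NC F e = {f\<in>F. f \<inter> e = {} \<and> \<not> cross e f}"

definition CR :: "nat set set \<Rightarrow> nat set \<Rightarrow> nat set set" where
  "CR F e = {f\<in>F. cross e f}"

lemma cross_disj:
  assumes "card e = 2" "card f = 2" "cross e f"
  shows "e \<inter> f = {}"
proof -
  obtain x y where xy: "x<y" "e = {x,y}" using card2E[OF assms(1)] by blast
  obtain z w where zw: "z<w" "f = {z,w}" using card2E[OF assms(2)] by blast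
  show ?thesis using assms(3) xy zw cross2[OF xy(1) zw(1)] by auto
qed

lemma tf_edge: "two_factor N F \<Longrightarrow> e \<in> F \<Longrightarrow> card e = 2 \<and> e \<subseteq> {1..N}"
  unfolding two_factor_def by auto

lemma per_edge:
  assumes tf: "two_factor N F" and eF: "e \<in> F"
  shows "card (CR F e) + card (NC F e) + 3 = N"
proof -
  have fin: "finite F" using tf_finite[OF tf] .
  have ce: "card e = 2" using tf_edge[OF tf eF] by blast
  obtain i j where ij: "i<j" "e = {i,j}" using card2E[OF ce] by blast
  have iN: "i \<in> {1..N}" "j \<in> {1..N}" using tf_edge[OF tf eF] ij by auto
  define Adj where "Adj = {f\<in>F. f \<noteq> e \<and> f \<inter> e \<noteq> {}}"
  define Ei where "Ei = {f\<in>F. i \<in> f}"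
  define Ej where "Ej = {f\<in>F. j \<in> f}"
  have cEi: "card Ei = 2" using tf iN unfolding two_factor_def Ei_def by auto
  have cEj: "card Ej = 2" using tf iN unfolding two_factor_def Ej_def by auto
  have EiEj: "Ei \<inter> Ej = {e}"
  proof
    show "Ei \<inter> Ej \<subseteq> {e}"
    proof
      fix f assume "f \<in> Ei \<inter> Ej"
      then have f: "f \<in> F" "i \<in> f" "j \<in> f" unfolding Ei_def Ej_def by auto
      have cf: "card f = 2" using tf_edge[OF tf f(1)] by blast
      have "{i,j} \<subseteq> f" using f by auto
      moreover have "finite f" using cf card.infinite by fastforce
      ultimately have "{i,j} = f" using cf ij by (intro card_subset_eq) auto
      then show "f \<in> {e}" using ij by auto
    qed
    show "{e} \<subseteq> Ei \<inter> Ej" using eF ij unfolding Ei_def Ej_def by auto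
  qed
  have finE: "finite Ei" "finite Ej" using fin unfolding Ei_def Ej_def by auto
  have "card (Ei \<union> Ej) = 3"
    using card_Un_Int[OF finE] cEi cEj EiEj by simp
  moreover have "Adj = (Ei \<union> Ej) - {e}" unfolding Adj_def Ei_def Ej_def using ij by auto
  moreover have "e \<in> Ei \<union> Ej" using eF ij unfolding Ei_def by auto
  ultimately have cAdj: "card Adj = 2" using finE by simp
  have Fsplit: "F = insert e (Adj \<union> (CR F e \<union> NC F e))"
    unfolding Adj_def CR_def NC_def using eF by blast
  have d1: "e \<notin> Adj \<union> (CR F e \<union> NC F e)"
    unfolding Adj_def CR_def NC_def using cross_irrefl ce by (auto simp: card_gt_0_iff[symmetric])
  have d2: "Adj \<inter> (CR F e \<union> NC F e) = {}"
  proof -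
    have "\<And>f. f \<in> CR F e \<Longrightarrow> f \<inter> e = {}"
      unfolding CR_def using cross_disj ce tf_edge[OF tf] by blast
    then show ?thesis unfolding Adj_def NC_def by blast
  qed
  have d3: "CR F e \<inter> NC F e = {}" unfolding CR_def NC_def by blast
  have finCN: "finite (CR F e)" "finite (NC F e)" "finite Adj"
    using fin unfolding CR_def NC_def Adj_def by auto
  have "card F = Suc (card Adj + (card (CR F e) + card (NC F e)))"
    apply (subst Fsplit)
    using d1 d2 d3 finCN by (simp add: card_Un_disjoint)
  then show ?thesis using tf_card[OF tf] cAdj by simp
qed

lemma card_CR_sum:
  assumes tf: "two_factor N F"
  shows "(\<Sum>e\<in>F. card (CR F e)) = 2 * crossings F"
proof -
  have fin: "finite F" using tf_finite[OF tf] .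
  define P where "P = {{e, f} | e f. e \<in> F \<and> f \<in> F \<and> cross e f}"
  define A where "A = (\<lambda>p. {(e,f). e \<in> F \<and> f \<in> F \<and> cross e f \<and> {e,f} = p})"
  have finP: "finite P"
    by (rule finite_subset[of _ "Pow F"]) (auto simp: P_def fin)
  have S: "Sigma F (CR F) = (\<Union>p\<in>P. A p)"
    unfolding P_def A_def CR_def by blast
  have Ap: "card (A p) = 2" if "p \<in> P" for p
  proof -
    from that obtain e0 f0 where p: "p = {e0,f0}" "e0 \<in> F" "f0 \<in> F" "cross e0 f0"
      unfolding P_def by blast
    have ne: "e0 \<noteq> f0" using p(4) cross_irrefl by blast
    have "A p = {(e0,f0),(f0,e0)}"
      unfolding A_def p(1) using p ne cross_sym[of e0 f0]
      by (auto simp: doubleton_eq_iff)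
    then show ?thesis using ne by simp
  qed
  have "card (Sigma F (CR F)) = (\<Sum>p\<in>P. card (A p))"
    unfolding S
  proof (rule card_UN_disjoint[OF finP])
    show "\<forall>i\<in>P. finite (A i)"
    proof
      fix p show "finite (A p)"
        by (rule finite_subset[of _ "F \<times> F"]) (auto simp: A_def fin)
    qed
    show "\<forall>i\<in>P. \<forall>j\<in>P. i \<noteq> j \<longrightarrow> A i \<inter> A j = {}"
      unfolding A_def by blast
  qed
  also have "\<dots> = 2 * card P" using Ap by simp
  finally have "card (Sigma F (CR F)) = 2 * card P" .
  moreover have "card (Sigma F (CR F)) = (\<Sum>e\<in>F. card (CR F e))"
    using fin by (intro card_SigmaI) (auto simp: CR_def)
  ultimately show ?thesis unfolding crossings_def P_def by simp
qed

lemma cross_identity: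
  assumes tf: "two_factor N F"
  shows "2 * crossings F + (\<Sum>e\<in>F. card (NC F e)) + 3 * N = N * N"
proof -
  have "(\<Sum>e\<in>F. card (CR F e) + card (NC F e) + 3) = (\<Sum>e\<in>F. N)"
    using per_edge[OF tf] by (intro sum.cong) auto
  then have "(\<Sum>e\<in>F. card (CR F e)) + (\<Sum>e\<in>F. card (NC F e)) + 3 * card F = card F * N"
    by (simp add: sum.distrib)
  then show ?thesis using card_CR_sum[OF tf] tf_card[OF tf] by simp
qed


lemma card_NC_le: "card (NC F e) \<le> card F" if "finite F" for F e
  using that unfolding NC_def by (intro card_mono) auto

locale BF =
  fixes N n :: nat
  assumes Nn: "N = 2*n" and ev: "even n" and n2: "2 \<le> n"
begin

definition Dia :: "nat set set" where
  "Dia = (\<lambda>k. {k, k+n}) ` {1..n}"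

lemma card_Dia: "card Dia = n"
proof -
  have "inj_on (\<lambda>k. {k, k+n}) {1..n}"
    by (auto simp: inj_on_def doubleton_eq_iff)
  then show ?thesis unfolding Dia_def by (simp add: card_image)
qed

lemma finite_Dia: "finite Dia" unfolding Dia_def by simp

lemma nc0_Dia:
  assumes tf: "two_factor N F" and eF: "e \<in> F" and nc: "NC F e = {}"
  shows "e \<in> Dia"
proof -
  have fin: "finite F" using tf_finite[OF tf] .
  have ce: "card e = 2" and eN: "e \<subseteq> {1..N}" using tf_edge[OF tf eF] by auto
  obtain i j where ij: "i<j" "e = {i,j}" using card2E[OF ce] by blast
  have iN: "1 \<le> i" "j \<le> N" using eN ij by auto
  have key: "2 * card U \<le> N - 1"
    if U: "U \<subseteq> {1..N}" "U \<inter> e = {}" "\<And>f. f \<in> F \<Longrightarrow> f \<noteq> e \<Longrightarrow> \<not> f \<subseteq> U" for U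
  proof -
    have le1: "card (f \<inter> U) \<le> 1" if fF: "f \<in> F - {e}" for f
    proof (rule ccontr)
      assume "\<not> card (f \<inter> U) \<le> 1"
      then have c2: "card (f \<inter> U) \<ge> 2" by simp
      have cf: "card f = 2" using tf_edge[OF tf] fF by auto
      have "finite f" using cf card.infinite by fastforce
      moreover have "card (f \<inter> U) \<le> card f" using \<open>finite f\<close> by (intro card_mono) auto
      ultimately have "f \<inter> U = f" using c2 cf by (intro card_subset_eq) auto
      then show False using U(3)[of f] fF by auto
    qed
    have "2 * card U = (\<Sum>f\<in>F. card (f \<inter> U))" using tf_sum[OF tf U(1)] by simp
    also have "\<dots> = card (e \<inter> U) + (\<Sum>f\<in>F - {e}. card (f \<inter> U))"
      using fin eF by (simp add: sum.remove)
    also have "\<dots> \<le> 0 + (\<Sum>f\<in>F - {e}. 1)"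
    proof (intro add_mono sum_mono)
      show "card (e \<inter> U) \<le> 0" using U(2) by (simp add: inf_commute)
    qed (use le1 in auto)
    also have "\<dots> = N - 1" using tf_card[OF tf] fin eF by simp
    finally show ?thesis .
  qed
  have notsub: "\<not> f \<subseteq> U" if fF: "f \<in> F" "f \<noteq> e"
    and U: "\<And>x y. x < y \<Longrightarrow> x \<in> U \<Longrightarrow> y \<in> U \<Longrightarrow> {x,y} \<inter> {i,j} = {} \<and> \<not> cross {i,j} {x,y}"
    for f U
  proof
    assume sub: "f \<subseteq> U"
    obtain x y where xy: "x<y" "f = {x,y}" using card2E tf_edge[OF tf fF(1)] by blast
    have "f \<in> NC F e" using U[OF xy(1)] sub xy fF ij unfolding NC_def by auto
    then show False using nc by simp
  qed
  have A: "2 * card {i<..<j} \<le> N - 1"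
  proof (rule key)
    show "{i<..<j} \<subseteq> {1..N}" using iN by auto
    show "{i<..<j} \<inter> e = {}" using ij by auto
    fix f assume "f \<in> F" "f \<noteq> e"
    then show "\<not> f \<subseteq> {i<..<j}"
      by (rule notsub) (use ij(1) in \<open>auto simp: cross2[OF ij(1)]\<close>)
  qed
  have B: "2 * card ({1..N} - {i..j}) \<le> N - 1"
  proof (rule key)
    show "{1..N} - {i..j} \<subseteq> {1..N}" by auto
    show "({1..N} - {i..j}) \<inter> e = {}" using ij by auto
    fix f assume "f \<in> F" "f \<noteq> e"
    then show "\<not> f \<subseteq> {1..N} - {i..j}"
      by (rule notsub) (use ij(1) in \<open>auto simp: cross2[OF ij(1)]\<close>)
  qed
  have cB: "card ({1..N} - {i..j}) = N - (j + 1 - i)"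
    using iN ij by (subst card_Diff_subset) auto
  have cA: "card {i<..<j} = j - Suc i" by simp
  have "j = i + n" using A B cA cB ij iN Nn by linarith
  then show ?thesis unfolding Dia_def using ij iN Nn by auto
qed

lemma nc_bound:
  assumes tf: "two_factor N F"
  shows "n \<le> (\<Sum>e\<in>F. card (NC F e))"
proof -
  have fin: "finite F" using tf_finite[OF tf] .
  have "n \<le> card F - card Dia" using tf_card[OF tf] card_Dia Nn by simp
  also have "\<dots> \<le> card (F - Dia)" using finite_Dia by (rule diff_card_le_card_Diff)
  also have "\<dots> = (\<Sum>e\<in>F - Dia. 1)" by simp
  also have "\<dots> \<le> (\<Sum>e\<in>F - Dia. card (NC F e))"
  proof (rule sum_mono)
    fix e assume e: "e \<in> F - Dia"
    have "NC F e \<noteq> {}" using nc0_Dia[OF tf] e by blast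
    moreover have "finite (NC F e)" using fin unfolding NC_def by simp
    ultimately show "1 \<le> card (NC F e)" by (simp add: Suc_le_eq card_gt_0_iff)
  qed
  also have "\<dots> \<le> (\<Sum>e\<in>F. card (NC F e))" using fin by (intro sum_mono2) auto
  finally show ?thesis .
qed

lemma nc_eq:
  assumes tf: "two_factor N F" and eq: "(\<Sum>e\<in>F. card (NC F e)) = n"
  shows "Dia \<subseteq> F" "\<And>d. d \<in> Dia \<Longrightarrow> NC F d = {}"
proof -
  have fin: "finite F" using tf_finite[OF tf] .
  have "n \<le> card F - card Dia" using tf_card[OF tf] card_Dia Nn by simp
  also have "\<dots> \<le> card (F - Dia)" using finite_Dia by (rule diff_card_le_card_Diff)
  also have "\<dots> = (\<Sum>e\<in>F - Dia. 1)" by simp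
  also have "\<dots> \<le> (\<Sum>e\<in>F - Dia. card (NC F e))"
  proof (rule sum_mono)
    fix e assume e: "e \<in> F - Dia"
    have "NC F e \<noteq> {}" using nc0_Dia[OF tf] e by blast
    moreover have "finite (NC F e)" using fin unfolding NC_def by simp
    ultimately show "1 \<le> card (NC F e)" by (simp add: Suc_le_eq card_gt_0_iff)
  qed
  finally have 1: "n \<le> card (F - Dia)" "card (F - Dia) \<le> (\<Sum>e\<in>F - Dia. card (NC F e))"
    using \<open>n \<le> card F - card Dia\<close> diff_card_le_card_Diff[OF finite_Dia, of F]
    apply linarith
    using \<open>(\<Sum>e\<in>F - Dia. 1) \<le> _\<close> by simp
  have split: "(\<Sum>e\<in>F. card (NC F e)) = (\<Sum>e\<in>F \<inter> Dia. card (NC F e)) + (\<Sum>e\<in>F - Dia. card (NC F e))"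
    using fin by (simp add: sum.Int_Diff)
  have z: "(\<Sum>e\<in>F \<inter> Dia. card (NC F e)) = 0" using split eq 1 by linarith
  have "card (F - Dia) \<le> n" using split eq z 1 by linarith
  then have "n \<le> card (F \<inter> Dia)"
  proof -
    have "card (F - Dia) = card F - card (F \<inter> Dia)" using fin by (simp add: card_Diff_subset_Int)
    moreover have "card (F \<inter> Dia) \<le> card F" using fin by (simp add: card_mono)
    ultimately show ?thesis using \<open>card (F - Dia) \<le> n\<close> tf_card[OF tf] Nn by linarith
  qed
  moreover have "card (F \<inter> Dia) \<le> card Dia" using card_mono[OF finite_Dia, of "F \<inter> Dia"] by auto
  ultimately have "F \<inter> Dia = Dia" using card_Dia finite_Dia by (intro card_subset_eq) auto
  then show DF: "Dia \<subseteq> F" by blast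
  show "NC F d = {}" if "d \<in> Dia" for d
  proof -
    have "card (NC F d) = 0" using z fin that DF by (simp add: sum_eq_0_iff) blast
    moreover have "finite (NC F d)" using fin unfolding NC_def by simp
    ultimately show ?thesis by simp
  qed
qed

end





context BF begin

lemma Dia_mem: "{k, k+n} \<in> Dia \<longleftrightarrow> 1 \<le> k \<and> k \<le> n"
  unfolding Dia_def by (auto simp: doubleton_eq_iff)

lemma M_len:
  assumes tf: "two_factor N F" and DF: "Dia \<subseteq> F" and ncD: "\<And>d. d \<in> Dia \<Longrightarrow> NC F d = {}"
    and eF: "e \<in> F" and eD: "e \<notin> Dia"
  obtains i j where "i < j" "e = {i,j}" "j = i+n-1 \<or> j = i+n+1" "1 \<le> i" "j \<le> N"
proof -
  have ce: "card e = 2" and eN: "e \<subseteq> {1..N}" using tf_edge[OF tf eF] by auto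
  obtain i j where ij: "i<j" "e = {i,j}" using card2E[OF ce] by blast
  have iN: "1 \<le> i" "j \<le> N" using eN ij by auto
  have nd: "j \<noteq> i + n" using eD ij iN Nn Dia_mem[of i] by auto
  have ex: "\<exists>k. 1 \<le> k \<and> k \<le> n \<and> k \<noteq> i \<and> k \<noteq> j \<and> k+n \<noteq> i \<and> k+n \<noteq> j \<and>
      \<not> ((k<i \<and> i<k+n \<and> k+n<j) \<or> (i<k \<and> k<j \<and> j<k+n))"
    if "\<not> (j = i+n-1 \<or> j = i+n+1)"
  proof (cases "j + 2 \<le> i + n")
    case True
    show ?thesis
    proof (cases "j < n")
      case True then show ?thesis using ij iN by (intro exI[of _ "j+1"]) auto
    next
      case jn: False
      show ?thesis
      proof (cases "i \<le> n")
        case True then show ?thesis using ij iN jn \<open>j + 2 \<le> i + n\<close>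
          by (intro exI[of _ "i-1"]) auto
      next
        case inn: False
        show ?thesis
        proof (cases "j < N")
          case True then show ?thesis using ij iN jn inn \<open>j + 2 \<le> i + n\<close> Nn
            by (intro exI[of _ "j+1-n"]) auto
        next
          case False then show ?thesis using ij iN jn inn \<open>j + 2 \<le> i + n\<close> Nn n2
            by (intro exI[of _ "1"]) auto
        qed
      qed
    qed
  next
    case False
    then have "i + n + 2 \<le> j" using that nd by auto
    then show ?thesis using ij iN Nn by (intro exI[of _ "i+1"]) auto
  qed
  show ?thesis
  proof (cases "j = i+n-1 \<or> j = i+n+1")
    case True then show ?thesis using that ij iN by blast
  next
    case False
    then obtain k where k: "1 \<le> k" "k \<le> n" "k \<noteq> i" "k \<noteq> j" "k+n \<noteq> i" "k+n \<noteq> j"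
      "\<not> ((k<i \<and> i<k+n \<and> k+n<j) \<or> (i<k \<and> k<j \<and> j<k+n))" using ex by blast
    have dD: "{k,k+n} \<in> Dia" using Dia_mem k by auto
    have "e \<in> NC F {k,k+n}" unfolding NC_def using eF ij k
      by (auto simp: cross2[of k "k+n" i j])
    then show ?thesis using ncD[OF dD] by simp
  qed
qed

definition dd :: "nat \<Rightarrow> nat" where "dd v = (if v \<le> n then v + n else v - n)"

lemma dd_Dia: "{v, dd v} \<in> Dia" if "v \<in> {1..N}"
proof (cases "v \<le> n")
  case True then show ?thesis using that Dia_mem Nn unfolding dd_def by auto
next
  case False
  then have "{v, dd v} = {v-n, (v-n)+n}" unfolding dd_def by auto
  then show ?thesis using that False Dia_mem[of "v-n"] Nn by auto
qed

lemma Dia_dd: "d \<in> Dia \<Longrightarrow> v \<in> d \<Longrightarrow> d = {v, dd v}"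
  unfolding Dia_def dd_def by auto

definition up :: "nat \<Rightarrow> nat" where "up v = (if v + n - 1 \<le> N then v + n - 1 else v + n - 1 - N)"
definition dn :: "nat \<Rightarrow> nat" where "dn v = (if n \<le> v then v - n + 1 else v + n + 1)"

lemma up_range: "v \<in> {1..N} \<Longrightarrow> up v \<in> {1..N}" unfolding up_def using Nn n2 by auto
lemma dn_range: "v \<in> {1..N} \<Longrightarrow> dn v \<in> {1..N}" unfolding dn_def using Nn n2 by auto
lemma up_dn: "v \<in> {1..N} \<Longrightarrow> up (dn v) = v" unfolding up_def dn_def using Nn n2 by auto
lemma dn_up: "v \<in> {1..N} \<Longrightarrow> dn (up v) = v" unfolding up_def dn_def using Nn n2 by auto
lemma up_ne_dn: "v \<in> {1..N} \<Longrightarrow> up v \<noteq> dn v" unfolding up_def dn_def using Nn n2 by auto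
lemma up_up: "v \<in> {1..N} \<Longrightarrow> 3 \<le> v \<Longrightarrow> up (up v) = v - 2" unfolding up_def using Nn n2 by auto
lemma up_odd: "v \<in> {1..N} \<Longrightarrow> odd (up v) = even v"
proof -
  assume v: "v \<in> {1..N}"
  obtain k where k: "n = 2*k" using ev by blast
  show ?thesis unfolding up_def using v k Nn n2 by (simp; presburger)
qed
lemma dn_odd: "v \<in> {1..N} \<Longrightarrow> odd (dn v) = even v"
proof -
  assume v: "v \<in> {1..N}"
  obtain k where k: "n = 2*k" using ev by blast
  show ?thesis unfolding dn_def using v k Nn n2 by (simp; presburger)
qed


definition qO :: "nat \<Rightarrow> nat" where "qO v = (if odd v then up v else dn v)"
definition qE :: "nat \<Rightarrow> nat" where "qE v = (if odd v then dn v else up v)"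
definition H :: "(nat \<Rightarrow> nat) \<Rightarrow> nat set set" where
  "H q = Dia \<union> {{v, q v} | v. v \<in> {1..N}}"

end

locale BFS = BF +
  fixes F :: "nat set set"
  assumes tf: "two_factor N F" and DF: "Dia \<subseteq> F" and ncD: "\<And>d. d \<in> Dia \<Longrightarrow> NC F d = {}"
begin

lemma partner_ex1:
  assumes v: "v \<in> {1..N}"
  shows "\<exists>!u. {v,u} \<in> F - Dia"
proof -
  define E where "E = {f\<in>F. v \<in> f}"
  have cE: "card E = 2" using tf v unfolding two_factor_def E_def by auto
  have DvE: "{v, dd v} \<in> E" using dd_Dia[OF v] DF unfolding E_def by auto
  have finE: "finite E" using cE card.infinite by fastforce
  have "card (E - {{v, dd v}}) = 1" using cE DvE finE by simp
  then obtain g where g: "E - {{v, dd v}} = {g}" using card_1_singletonE by blast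
  then have gE: "g \<in> E" "g \<noteq> {v, dd v}" by (metis Diff_iff singletonI singletonD)+
  then have gF: "g \<in> F" "v \<in> g" unfolding E_def by auto
  have gD: "g \<notin> Dia" using Dia_dd[of g v] gF(2) gE(2) by auto
  obtain x y where xy: "x<y" "g = {x,y}" using card2E tf_edge[OF tf gF(1)] by blast
  obtain u where u: "g = {v,u}"
  proof (cases "v = x")
    case True then show ?thesis using that xy by blast
  next
    case False then have "g = {v, x}" using xy gF(2) by blast
    then show ?thesis using that by blast
  qed
  show ?thesis
  proof (rule ex1I[of _ u])
    show "{v,u} \<in> F - Dia" using u gF gD by auto
    fix u' assume u': "{v,u'} \<in> F - Dia"
    have "{v,u'} \<in> E" using u' unfolding E_def by auto
    moreover have "{v,u'} \<noteq> {v, dd v}"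
    proof
      assume "{v,u'} = {v, dd v}" then show False using u' dd_Dia[OF v] by simp
    qed
    ultimately have "{v,u'} \<in> E - {{v, dd v}}" by simp
    then have "{v,u'} = g" unfolding g by simp
    then show "u' = u" using u by (auto simp: doubleton_eq_iff)
  qed
qed

definition pt :: "nat \<Rightarrow> nat" where "pt v = (THE u. {v,u} \<in> F - Dia)"

lemma pt_F: "v \<in> {1..N} \<Longrightarrow> {v, pt v} \<in> F - Dia"
  unfolding pt_def by (rule theI') (rule partner_ex1)

lemma pt_U: "v \<in> {1..N} \<Longrightarrow> {v, u} \<in> F - Dia \<Longrightarrow> pt v = u"
  unfolding pt_def by (rule the1_equality[OF partner_ex1])

lemma pt_range: "v \<in> {1..N} \<Longrightarrow> pt v \<in> {1..N}"
proof -
  assume v: "v \<in> {1..N}"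
  have "{v, pt v} \<subseteq> {1..N}" using tf_edge[OF tf, of "{v, pt v}"] pt_F[OF v] by simp
  then show ?thesis by simp
qed

lemma pt_pt: "v \<in> {1..N} \<Longrightarrow> pt (pt v) = v"
proof -
  assume v: "v \<in> {1..N}"
  have "{pt v, v} = {v, pt v}" by blast
  then show ?thesis using pt_U[OF pt_range[OF v], of v] pt_F[OF v] by simp
qed

lemma pt_updn: "v \<in> {1..N} \<Longrightarrow> pt v = up v \<or> pt v = dn v"
proof -
  assume v: "v \<in> {1..N}"
  have e: "{v, pt v} \<in> F" "{v, pt v} \<notin> Dia" using pt_F[OF v] by auto
  obtain i j where ij: "i < j" "{v, pt v} = {i,j}" "j = i+n-1 \<or> j = i+n+1" "1 \<le> i" "j \<le> N"
    using M_len[OF tf DF ncD e] by blast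
  then have "(v = i \<and> pt v = j) \<or> (v = j \<and> pt v = i)" by (auto simp: doubleton_eq_iff)
  then show ?thesis using ij Nn n2 unfolding up_def dn_def by auto
qed

definition sg :: "nat \<Rightarrow> bool" where "sg v \<longleftrightarrow> pt v = up v"

lemma sg_up: "v \<in> {1..N} \<Longrightarrow> sg v \<longleftrightarrow> \<not> sg (up v)"
proof -
  assume v: "v \<in> {1..N}"
  have uv: "up v \<in> {1..N}" using up_range[OF v] .
  show ?thesis
  proof
    assume "sg v"
    then have "pt v = up v" unfolding sg_def .
    then have "pt (up v) = dn (up v)" using pt_pt[OF v] dn_up[OF v] by simp
    then show "\<not> sg (up v)" unfolding sg_def using up_ne_dn[OF uv] by simp
  next
    assume "\<not> sg (up v)"
    then have "pt (up v) = dn (up v)" using pt_updn[OF uv] unfolding sg_def by blast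
    then have "pt (up v) = v" using dn_up[OF v] by simp
    then have "pt v = up v" using pt_pt[OF uv] by simp
    then show "sg v" unfolding sg_def .
  qed
qed

lemma sg_step: "v \<in> {1..N} \<Longrightarrow> 3 \<le> v \<Longrightarrow> sg v \<longleftrightarrow> sg (v - 2)"
  using sg_up[of v] sg_up[of "up v"] up_range[of v] up_up[of v] by auto

lemma sg_par: "v \<in> {1..N} \<Longrightarrow> sg v \<longleftrightarrow> sg (if odd v then 1 else 2)"
proof (induction v rule: less_induct)
  case (less v)
  show ?case
  proof (cases "3 \<le> v")
    case True
    then have "sg v \<longleftrightarrow> sg (v - 2)" using sg_step less.prems by blast
    moreover have "sg (v-2) \<longleftrightarrow> sg (if odd (v-2) then 1 else 2)"
    proof (rule less.IH)
      show "v - 2 < v" using True by simp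
      show "v - 2 \<in> {1..N}" using True less.prems by auto
    qed
    moreover have "odd (v-2) = odd v" using True by presburger
    ultimately show ?thesis by simp
  next
    case False
    then have "v = 1 \<or> v = 2" using less.prems by auto
    then show ?thesis by auto
  qed
qed

lemma sg12: "sg 1 \<longleftrightarrow> \<not> sg 2"
proof -
  have "up 1 = n" unfolding up_def using Nn n2 by auto
  then have "sg 1 \<longleftrightarrow> \<not> sg n" using sg_up[of 1] Nn n2 by auto
  moreover have "sg n \<longleftrightarrow> sg 2" using sg_par[of n] Nn n2 ev by auto
  ultimately show ?thesis by simp
qed

lemma pt_q: "(\<forall>v\<in>{1..N}. pt v = qO v) \<or> (\<forall>v\<in>{1..N}. pt v = qE v)"
proof (cases "sg 1")
  case True
  have "pt v = qO v" if v: "v \<in> {1..N}" for v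
  proof (cases "odd v")
    case True
    then show ?thesis using sg_par[OF v] \<open>sg 1\<close> unfolding qO_def sg_def by simp
  next
    case False
    then have "\<not> sg v" using sg_par[OF v] \<open>sg 1\<close> sg12 by simp
    then show ?thesis using False pt_updn[OF v] unfolding qO_def sg_def by auto
  qed
  then show ?thesis by blast
next
  case False
  have "pt v = qE v" if v: "v \<in> {1..N}" for v
  proof (cases "odd v")
    case True
    then have "\<not> sg v" using sg_par[OF v] False by simp
    then show ?thesis using True pt_updn[OF v] unfolding qE_def sg_def by auto
  next
    case ev': False
    then have "sg v" using sg_par[OF v] False sg12 by simp
    then show ?thesis using ev' unfolding qE_def sg_def by simp
  qed
  then show ?thesis by blast
qed

lemma F_H: "F = H qO \<or> F = H qE"
proof -
  have "F = H q" if q: "\<forall>v\<in>{1..N}. pt v = q v" for q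
  proof
    show "F \<subseteq> H q"
    proof
      fix e assume eF: "e \<in> F"
      show "e \<in> H q"
      proof (cases "e \<in> Dia")
        case True then show ?thesis unfolding H_def by blast
      next
        case False
        obtain x y where xy: "x<y" "e = {x,y}" using card2E tf_edge[OF tf eF] by blast
        have x: "x \<in> {1..N}" using tf_edge[OF tf eF] xy by auto
        have "pt x = y" using pt_U[OF x] eF False xy by simp
        then have "e = {x, q x}" using q x xy by simp
        then show ?thesis unfolding H_def using x by blast
      qed
    qed
    show "H q \<subseteq> F"
    proof
      fix e assume "e \<in> H q"
      then consider "e \<in> Dia" | v where "v \<in> {1..N}" "e = {v, q v}" unfolding H_def by blast
      then show "e \<in> F"
      proof cases
        case 1 then show ?thesis using DF by blast
      next
        case 2 then show ?thesis using pt_F[of v] q by auto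
      qed
    qed
  qed
  then show ?thesis using pt_q by blast
qed

end





lemma wrap_in: "1 \<le> k \<Longrightarrow> k \<le> int N \<Longrightarrow> wrap N k = nat k"
  unfolding wrap_def by simp

lemma wrap0: "0 < N \<Longrightarrow> wrap N 0 = N"
  unfolding wrap_def using zmod_minus1[of "int N"] by simp

lemma ex4: "(\<exists>i. P i \<and> i < Suc (Suc (Suc (Suc 0)))) \<longleftrightarrow> P 0 \<or> P (Suc 0) \<or> P (Suc (Suc 0)) \<or> P (Suc (Suc (Suc 0)))"
  by (simp only: less_Suc_eq less_nat_zero_code) blast
lemma cycle_edges4: "cycle_edges [a,b,c,d] = {{a,b},{b,c},{c,d},{d,a}}"
  unfolding cycle_edges_def
  apply (rule set_eqI)
  apply (simp only: mem_Collect_eq length_Cons list.size ex4)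
  apply simp
  done


lemma tf_inv:
  assumes P: "\<And>v. v \<in> {1..N} \<Longrightarrow> d v \<in> {1..N} \<and> q v \<in> {1..N} \<and> d (d v) = v \<and> q (q v) = v
      \<and> d v \<noteq> v \<and> q v \<noteq> v \<and> d v \<noteq> q v"
  shows "two_factor N ({{v, d v} | v. v \<in> {1..N}} \<union> {{v, q v} | v. v \<in> {1..N}})"
  (is "two_factor N ?G")
proof -
  have edges: "e \<subseteq> {1..N} \<and> card e = 2" if "e \<in> ?G" for e
  proof -
    from that consider v where "v \<in> {1..N}" "e = {v, d v}" | v where "v \<in> {1..N}" "e = {v, q v}"
      by blast
    then show ?thesis
    proof cases
      case 1 then show ?thesis using P[of v] by auto
    next
      case 2 then show ?thesis using P[of v] by auto
    qed
  qed
  have deg: "{e \<in> ?G. w \<in> e} = {{w, d w}, {w, q w}}" if w: "w \<in> {1..N}" for w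
  proof (rule set_eqI, rule iffI)
    fix e assume "e \<in> {e \<in> ?G. w \<in> e}"
    then have eG: "e \<in> ?G" and we: "w \<in> e" by auto
    from eG consider v where "v \<in> {1..N}" "e = {v, d v}" | v where "v \<in> {1..N}" "e = {v, q v}"
      by blast
    then show "e \<in> {{w, d w}, {w, q w}}"
    proof cases
      case 1
      then have "w = v \<or> w = d v" using we by simp
      then have "e = {w, d w}" using 1 P[of v] by auto
      then show ?thesis by simp
    next
      case 2
      then have "w = v \<or> w = q v" using we by simp
      then have "e = {w, q w}" using 2 P[of v] by auto
      then show ?thesis by simp
    qed
  next
    fix e assume "e \<in> {{w, d w}, {w, q w}}"
    then have "e = {w, d w} \<or> e = {w, q w}" by simp
    then show "e \<in> {e \<in> ?G. w \<in> e}" using w by blast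
  qed
  have "card {{w, d w}, {w, q w}} = 2" if w: "w \<in> {1..N}" for w
  proof -
    have "{w, d w} \<noteq> {w, q w}" using P[OF w] by (auto simp: doubleton_eq_iff)
    then show ?thesis by simp
  qed
  then show ?thesis unfolding two_factor_def using edges deg by simp
qed


lemma odd2: "odd (a::nat) \<Longrightarrow> odd b \<Longrightarrow> a \<noteq> b \<Longrightarrow> a + 2 \<le> b \<or> b + 2 \<le> a"
  by presburger

lemma NC_empty: "(\<And>f. f \<in> X \<Longrightarrow> f \<inter> e = {} \<Longrightarrow> cross e f) \<Longrightarrow> NC X e = {}"
  unfolding NC_def by blast

lemma NC_single: "p \<in> X \<Longrightarrow> p \<inter> e = {} \<Longrightarrow> \<not> cross e p
  \<Longrightarrow> (\<And>f. f \<in> X \<Longrightarrow> f \<inter> e = {} \<Longrightarrow> \<not> cross e f \<Longrightarrow> f = p) \<Longrightarrow> NC X e = {p}"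
  unfolding NC_def by blast


lemma crossI: "x<y \<Longrightarrow> z<w \<Longrightarrow> (x<z \<and> z<y \<and> y<w) \<or> (z<x \<and> x<w \<and> w<y) \<Longrightarrow> cross {x,y} {z,w}"
  for x y z w :: nat using cross2 by blast

lemma nc_contra: "\<not> cross e f \<Longrightarrow> f = {z,w} \<Longrightarrow> e = {x,y} \<Longrightarrow> x<y \<Longrightarrow> z<w
  \<Longrightarrow> (x<z \<and> z<y \<and> y<w) \<or> (z<x \<and> x<w \<and> w<y) \<Longrightarrow> P"
  for x y z w :: nat using crossI by blast

context BF begin

definition Od :: "nat set" where "Od = {a. odd a \<and> a < n}"
definition Od3 :: "nat set" where "Od3 = {a. odd a \<and> 1 < a \<and> a < n}"

definition X1 :: "nat set set" where
  "X1 = Dia \<union> (\<lambda>a. {a, a+n+1}) ` Od \<union> (\<lambda>a. {a+1, a+n}) ` Od"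

definition X2 :: "nat set set" where
  "X2 = Dia \<union> (\<lambda>a. {a, a+n-1}) ` Od \<union> (\<lambda>a. {a-1, a+n}) ` Od3 \<union> {{n+1, N}}"

lemma Ndiv: "N div 2 = n" using Nn by simp


lemma h1_X1: "h1 N = X1"
proof -
  have cyc: "cycle_edges [wrap N (int a), wrap N (int a + int n),
                  wrap N (int a + 1), wrap N (int a + int n + 1)]
      = {{a,a+n},{a+n,a+1},{a+1,a+n+1},{a+n+1,a}}" if "odd a" "1 \<le> a" "a \<le> n - 1" for a
  proof -
    have "wrap N (int a) = a" "wrap N (int a + int n) = a+n"
      "wrap N (int a + 1) = a+1" "wrap N (int a + int n + 1) = a+n+1"
      using that Nn n2 ev by (subst wrap_in; simp; presburger)+
    then show ?thesis by (simp add: cycle_edges4)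
  qed
  have h: "h1 N = (\<Union>a\<in>{a. odd a \<and> 1 \<le> a \<and> a \<le> n - 1}. {{a,a+n},{a+n,a+1},{a+1,a+n+1},{a+n+1,a}})"
    unfolding h1_def Ndiv by (intro SUP_cong refl) (simp add: cyc)
  show ?thesis
  proof
    show "h1 N \<subseteq> X1"
    proof
      fix e assume "e \<in> h1 N"
      then obtain a where a: "odd a" "1 \<le> a" "a \<le> n - 1"
        and e: "e = {a,a+n} \<or> e = {a+n,a+1} \<or> e = {a+1,a+n+1} \<or> e = {a+n+1,a}"
        unfolding h by blast
      have aO: "a \<in> Od" unfolding Od_def using a n2 by auto
      have D1: "{a,a+n} \<in> Dia" "{a+1,a+1+n} \<in> Dia" using Dia_mem[of a] Dia_mem[of "a+1"] a n2 by auto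
      have "{a+n,a+1} = {a+1,a+n}" "{a+n+1,a} = {a,a+n+1}" "{a+1,a+n+1} = {a+1,a+1+n}" by auto
      then show "e \<in> X1" using e D1 aO unfolding X1_def by auto
    qed
    show "X1 \<subseteq> h1 N"
    proof
      fix e assume "e \<in> X1"
      then consider k where "1 \<le> k" "k \<le> n" "e = {k,k+n}"
        | a where "a \<in> Od" "e = {a, a+n+1}" | a where "a \<in> Od" "e = {a+1, a+n}"
        unfolding X1_def Dia_def by (elim UnE imageE) (auto simp del: insert_commute)
      then show "e \<in> h1 N"
      proof cases
        case 1
        show ?thesis
        proof (cases "odd k")
          case True
          then have "k \<le> n - 1" using 1 ev by (cases "k = n") auto
          then show ?thesis unfolding h using 1 True by blast
        next
          case False
          have k: "odd (k-1)" "1 \<le> k-1" "k-1 \<le> n-1" using 1 False by presburger+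
          have "e = {(k-1)+1, (k-1)+n+1}" using 1 k by auto
          then show ?thesis unfolding h using k by blast
        qed
      next
        case 2
        have a: "odd a" "1 \<le> a" "a \<le> n - 1" using 2(1) unfolding Od_def mem_Collect_eq by presburger+
        have "e = {a+n+1, a}" using 2 by auto
        then show ?thesis unfolding h using a by blast
      next
        case 3
        have a: "odd a" "1 \<le> a" "a \<le> n - 1" using 3(1) unfolding Od_def mem_Collect_eq by presburger+
        have "e = {a+n, a+1}" using 3 by auto
        then show ?thesis unfolding h using a by blast
      qed
    qed
  qed
qed


lemma h2_X2: "h2 N = X2"
proof -
  define w where "w a = (if a = 1 then N else a - 1)" for a
  have cyc: "cycle_edges [wrap N (int a), wrap N (int a + int n),
                  wrap N (int a - 1), wrap N (int a + int n - 1)]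
      = {{a,a+n},{a+n,w a},{w a,a+n-1},{a+n-1,a}}" if "odd a" "1 \<le> a" "a \<le> n - 1" for a
  proof -
    have "wrap N (int a) = a" "wrap N (int a + int n) = a+n"
      "wrap N (int a + int n - 1) = a+n-1"
      using that Nn n2 ev by (subst wrap_in; simp; presburger)+
    moreover have "wrap N (int a - 1) = w a"
    proof (cases "a = 1")
      case True then show ?thesis using wrap0[of N] Nn n2 unfolding w_def by simp
    next
      case False then show ?thesis using that Nn n2 unfolding w_def by (subst wrap_in) auto
    qed
    ultimately show ?thesis by (simp add: cycle_edges4)
  qed
  have h: "h2 N = (\<Union>a\<in>{a. odd a \<and> 1 \<le> a \<and> a \<le> n - 1}. {{a,a+n},{a+n,w a},{w a,a+n-1},{a+n-1,a}})"
    unfolding h2_def Ndiv by (intro SUP_cong refl) (simp add: cyc)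
  have hI: "e \<in> h2 N" if "odd a" "1 \<le> a" "a \<le> n-1"
    "e = {a,a+n} \<or> e = {a+n,w a} \<or> e = {w a,a+n-1} \<or> e = {a+n-1,a}" for a e
    unfolding h using that by blast
  have one: "odd (1::nat)" "(1::nat) \<le> 1" "1 \<le> n - 1" using n2 by auto
  show ?thesis
  proof
    show "h2 N \<subseteq> X2"
    proof
      fix e assume "e \<in> h2 N"
      then obtain a where a: "odd a" "1 \<le> a" "a \<le> n - 1"
        and e: "e = {a,a+n} \<or> e = {a+n,w a} \<or> e = {w a,a+n-1} \<or> e = {a+n-1,a}"
        unfolding h by blast
      have aO: "a \<in> Od" unfolding Od_def using a n2 by auto
      have e4: "{a+n-1,a} = {a,a+n-1}" by auto
      have m1: "{a,a+n} \<in> X2" using Dia_mem[of a] a n2 unfolding X2_def by auto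
      have m4: "{a+n-1,a} \<in> X2" unfolding e4 X2_def using aO by blast
      have m23: "{a+n,w a} \<in> X2 \<and> {w a,a+n-1} \<in> X2"
      proof (cases "a = 1")
        case True
        have "w a = N" unfolding w_def using True by simp
        moreover have "{N, a+n-1} = {n, n+n}" "{a+n, N} = {n+1, N}" using True Nn by auto
        moreover have "{n, n+n} \<in> Dia" using Dia_mem[of n] n2 by auto
        ultimately show ?thesis unfolding X2_def by simp
      next
        case False
        then have "w a = a - 1" unfolding w_def by simp
        moreover have "{a-1, a+n-1} = {a-1, (a-1)+n}" "{a+n, a-1} = {a-1,a+n}" using False a by auto
        moreover have "{a-1, (a-1)+n} \<in> Dia" using Dia_mem[of "a-1"] False a n2 by auto
        moreover have "a \<in> Od3" unfolding Od3_def using a False n2 by auto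
        ultimately show ?thesis unfolding X2_def by simp
      qed
      show "e \<in> X2" using e m1 m4 m23 by (elim disjE) simp_all
    qed
    show "X2 \<subseteq> h2 N"
    proof
      fix e assume "e \<in> X2"
      then consider k where "1 \<le> k" "k \<le> n" "e = {k,k+n}"
        | a where "a \<in> Od" "e = {a, a+n-1}" | a where "a \<in> Od3" "e = {a-1, a+n}"
        | "e = {n+1, N}"
      proof -
        assume r1: "\<And>k. 1 \<le> k \<Longrightarrow> k \<le> n \<Longrightarrow> e = {k,k+n} \<Longrightarrow> thesis"
          and r2: "\<And>a. a \<in> Od \<Longrightarrow> e = {a, a+n-1} \<Longrightarrow> thesis"
          and r3: "\<And>a. a \<in> Od3 \<Longrightarrow> e = {a-1, a+n} \<Longrightarrow> thesis"
          and r4: "e = {n+1, N} \<Longrightarrow> thesis"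
        from \<open>e \<in> X2\<close> show thesis unfolding X2_def Dia_def
        proof (elim UnE imageE)
          fix k assume "k \<in> {1..n}" "e = {k,k+n}" then show thesis using r1[of k] by simp
        next
          fix a assume "a \<in> Od" "e = {a,a+n-1}" then show thesis using r2[of a] by simp
        next
          fix a assume "a \<in> Od3" "e = {a-1,a+n}" then show thesis using r3[of a] by simp
        next
          assume "e \<in> {{n+1,N}}" then show thesis using r4 by simp
        qed
      qed
      then show "e \<in> h2 N"
      proof cases
        case 1
        show ?thesis
        proof (cases "odd k")
          case True
          then have "k \<le> n - 1" using 1 ev by (cases "k = n") auto
          then show ?thesis using hI[of k e] 1 True by blast
        next
          case False
          show ?thesis
          proof (cases "k = n")
            case True
            have "w 1 = N" unfolding w_def by simp
            then have "e = {w 1, 1+n-1}" using 1 True Nn by auto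
            then show ?thesis using hI[OF one] by blast
          next
            case kn: False
            have k: "odd (k+1)" "1 \<le> k+1" "k+1 \<le> n-1" using 1 False kn ev by presburger+
            have "w (k+1) = k" unfolding w_def using 1 by simp
            then have "e = {w (k+1), (k+1)+n-1}" using 1 by auto
            then show ?thesis using hI[OF k] by blast
          qed
        qed
      next
        case 2
        have a: "odd a" "1 \<le> a" "a \<le> n - 1" using 2(1) unfolding Od_def mem_Collect_eq by presburger+
        have "e = {a+n-1, a}" using 2 by auto
        then show ?thesis using hI[OF a] by blast
      next
        case 3
        have a: "odd a" "1 \<le> a" "a \<le> n - 1" "a \<noteq> 1" using 3(1) unfolding Od3_def mem_Collect_eq by presburger+
        have "w a = a - 1" unfolding w_def using a by simp
        then have "e = {a+n, w a}" using 3 by auto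
        then show ?thesis using hI[OF a(1-3)] by blast
      next
        case 4
        have "w 1 = N" unfolding w_def by simp
        then have "e = {1+n, w 1}" using 4 by auto
        then show ?thesis using hI[OF one] by blast
      qed
    qed
  qed
qed


lemma Dia_alt: "Dia = {{v, dd v} | v. v \<in> {1..N}}"
proof (rule set_eqI, rule iffI)
  fix e assume "e \<in> Dia"
  then obtain k where k: "k \<in> {1..n}" "e = {k, k+n}" unfolding Dia_def by blast
  then have "dd k = k + n" "k \<in> {1..N}" unfolding dd_def using Nn by auto
  then show "e \<in> {{v, dd v} | v. v \<in> {1..N}}" using k by auto
next
  fix e assume "e \<in> {{v, dd v} | v. v \<in> {1..N}}"
  then obtain v where "v \<in> {1..N}" "e = {v, dd v}" by blast
  then show "e \<in> Dia" using dd_Dia by simp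
qed

lemma dd_props: "v \<in> {1..N} \<Longrightarrow> dd v \<in> {1..N} \<and> dd (dd v) = v \<and> dd v \<noteq> v \<and> odd (dd v) = odd v"
proof -
  assume v: "v \<in> {1..N}"
  obtain k where k: "n = 2*k" using ev by blast
  show ?thesis unfolding dd_def using v Nn n2 k by (simp; presburger)
qed

lemma q_props:
  assumes q: "q = qO \<or> q = qE" and v: "v \<in> {1..N}"
  shows "q v \<in> {1..N} \<and> q (q v) = v \<and> q v \<noteq> v \<and> odd (q v) = even v"
proof -
  have ur: "up v \<in> {1..N}" "dn v \<in> {1..N}" using up_range[OF v] dn_range[OF v] .
  have po: "odd (up v) = even v" "odd (dn v) = even v" using up_odd[OF v] dn_odd[OF v] .
  have "q (q v) = v" using q ur po up_dn[OF v] dn_up[OF v] unfolding qO_def qE_def by auto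
  moreover have "odd (q v) = even v" using q po unfolding qO_def qE_def by auto
  moreover have "q v \<in> {1..N}" using q ur unfolding qO_def qE_def by auto
  ultimately show ?thesis by auto
qed

lemma tf_H: "q = qO \<or> q = qE \<Longrightarrow> two_factor N (H q)"
proof -
  assume q: "q = qO \<or> q = qE"
  have "H q = {{v, dd v} | v. v \<in> {1..N}} \<union> {{v, q v} | v. v \<in> {1..N}}"
    unfolding H_def Dia_alt ..
  moreover have "two_factor N ({{v, dd v} | v. v \<in> {1..N}} \<union> {{v, q v} | v. v \<in> {1..N}})"
  proof (rule tf_inv)
    fix v assume v: "v \<in> {1..N}"
    show "dd v \<in> {1..N} \<and> q v \<in> {1..N} \<and> dd (dd v) = v \<and> q (q v) = v \<and> dd v \<noteq> v \<and> q v \<noteq> v \<and> dd v \<noteq> q v"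
      using dd_props[OF v] q_props[OF q v] by metis
  qed
  ultimately show ?thesis by simp
qed


lemma X1_D: "1 \<le> k \<Longrightarrow> k \<le> n \<Longrightarrow> {k,k+n} \<in> X1" unfolding X1_def using Dia_mem by simp
lemma X1_A: "a \<in> Od \<Longrightarrow> {a,a+n+1} \<in> X1" unfolding X1_def by blast
lemma X1_B: "a \<in> Od \<Longrightarrow> {a+1,a+n} \<in> X1" unfolding X1_def by blast
lemma X2_D: "1 \<le> k \<Longrightarrow> k \<le> n \<Longrightarrow> {k,k+n} \<in> X2" unfolding X2_def using Dia_mem by simp
lemma X2_A: "a \<in> Od \<Longrightarrow> {a,a+n-1} \<in> X2" unfolding X2_def by blast
lemma X2_B: "a \<in> Od3 \<Longrightarrow> {a-1,a+n} \<in> X2" unfolding X2_def by blast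
lemma X2_C: "{n+1,N} \<in> X2" unfolding X2_def by blast
lemma H_I: "v \<in> {1..N} \<Longrightarrow> {v, q v} \<in> H q" unfolding H_def by blast
lemma H_D: "e \<in> Dia \<Longrightarrow> e \<in> H q" unfolding H_def by blast
lemma H_E: "e \<in> H q \<Longrightarrow> (e \<in> Dia \<Longrightarrow> P) \<Longrightarrow> (\<And>v. v \<in> {1..N} \<Longrightarrow> e = {v, q v} \<Longrightarrow> P) \<Longrightarrow> P"
  unfolding H_def by blast
lemma X1_E:
  assumes "e \<in> X1" "\<And>k. 1 \<le> k \<Longrightarrow> k \<le> n \<Longrightarrow> e = {k,k+n} \<Longrightarrow> P"
    "\<And>a. a \<in> Od \<Longrightarrow> e = {a,a+n+1} \<Longrightarrow> P" "\<And>a. a \<in> Od \<Longrightarrow> e = {a+1,a+n} \<Longrightarrow> P"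
  shows P
  using assms(1) unfolding X1_def Dia_def
proof (elim UnE imageE)
  fix k assume "k \<in> {1..n}" "e = {k,k+n}" then show P using assms(2)[of k] by simp
next
  fix a assume "a \<in> Od" "e = {a,a+n+1}" then show P using assms(3)[of a] by simp
next
  fix a assume "a \<in> Od" "e = {a+1,a+n}" then show P using assms(4)[of a] by simp
qed

lemma X2_E:
  assumes "e \<in> X2" "\<And>k. 1 \<le> k \<Longrightarrow> k \<le> n \<Longrightarrow> e = {k,k+n} \<Longrightarrow> P"
    "\<And>a. a \<in> Od \<Longrightarrow> e = {a,a+n-1} \<Longrightarrow> P" "\<And>a. a \<in> Od3 \<Longrightarrow> e = {a-1,a+n} \<Longrightarrow> P"
    "e = {n+1,N} \<Longrightarrow> P"
  shows P
  using assms(1) unfolding X2_def Dia_def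
proof (elim UnE imageE)
  fix k assume "k \<in> {1..n}" "e = {k,k+n}" then show P using assms(2)[of k] by simp
next
  fix a assume "a \<in> Od" "e = {a,a+n-1}" then show P using assms(3)[of a] by simp
next
  fix a assume "a \<in> Od3" "e = {a-1,a+n}" then show P using assms(4)[of a] by simp
next
  assume "e \<in> {{n+1,N}}" then show P using assms(5) by simp
qed

lemma Dia_E:
  assumes "e \<in> Dia" "\<And>k. 1 \<le> k \<Longrightarrow> k \<le> n \<Longrightarrow> e = {k,k+n} \<Longrightarrow> P" shows P
  using assms(1) unfolding Dia_def
proof (elim imageE)
  fix k assume "k \<in> {1..n}" "e = {k,k+n}" then show P using assms(2)[of k] by simp
qed

lemma HE_X1: "H qE = X1"
proof (rule set_eqI, rule iffI)
  fix e assume "e \<in> H qE"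
  then show "e \<in> X1"
  proof (rule H_E)
    assume "e \<in> Dia" then show ?thesis by (rule Dia_E) (simp add: X1_D)
  next
    fix v assume v: "v \<in> {1..N}" and e: "e = {v, qE v}"
    obtain k where k: "n = 2*k" using ev by blast
    consider "odd v" "v < n" | "odd v" "n \<le> v" | "even v" "v \<le> n" | "even v" "n < v" by linarith
    then show ?thesis
    proof cases
      case 1
      then have "qE v = v + n + 1" unfolding qE_def dn_def by simp
      moreover have "v \<in> Od" unfolding Od_def using 1 by simp
      ultimately show ?thesis using e X1_A by simp
    next
      case 2
      then have q: "qE v = v - n + 1" unfolding qE_def dn_def by simp
      have a: "v - n \<in> Od" unfolding Od_def using 2 v Nn k by (simp; presburger?)
      have "e = {(v-n)+1, (v-n)+n}" using e q 2 by auto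
      then show ?thesis using X1_B[OF a] by simp
    next
      case 3
      then have q: "qE v = v + n - 1" unfolding qE_def up_def using Nn by simp
      have a: "v - 1 \<in> Od" unfolding Od_def using 3 v Nn k by simp
      have "e = {(v-1)+1, (v-1)+n}" using e q 3 v by auto
      then show ?thesis using X1_B[OF a] by simp
    next
      case 4
      have "\<not> v + n - 1 \<le> N" using 4 v Nn k by presburger
      then have q: "qE v = v - n - 1" unfolding qE_def up_def using Nn v 4 by simp
      have a: "v - n - 1 \<in> Od" unfolding Od_def using 4 v Nn k by (simp; presburger?)
      have "e = {(v-n-1), (v-n-1)+n+1}" using e q 4 v k by auto
      then show ?thesis using X1_A[OF a] by simp
    qed
  qed
next
  fix e assume "e \<in> X1"
  then show "e \<in> H qE"
  proof (rule X1_E)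
    fix k assume "1 \<le> k" "k \<le> n" "e = {k,k+n}"
    then show ?thesis using H_D Dia_mem by simp
  next
    fix a assume a: "a \<in> Od" "e = {a,a+n+1}"
    then have "qE a = a+n+1" "a \<in> {1..N}" unfolding qE_def dn_def Od_def using Nn by auto
    then show ?thesis using H_I[of a qE] a by simp
  next
    fix a assume a: "a \<in> Od" "e = {a+1,a+n}"
    have ao: "odd a" "a < n" using a(1) unfolding Od_def by auto
    have "qE (a+1) = a+n" "a+1 \<in> {1..N}" unfolding qE_def up_def using ao Nn by auto
    then show ?thesis using H_I[of "a+1" qE] a by simp
  qed
qed


lemma HO_X2: "H qO = X2"
proof (rule set_eqI, rule iffI)
  fix e assume "e \<in> H qO"
  then show "e \<in> X2"
  proof (rule H_E)
    assume "e \<in> Dia" then show ?thesis by (rule Dia_E) (simp add: X2_D)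
  next
    fix v assume v: "v \<in> {1..N}" and e: "e = {v, qO v}"
    obtain k where k: "n = 2*k" using ev by blast
    have vb': "1 \<le> v" "v \<le> N" using v by auto
    consider "odd v" "v < n" | "v = n+1" | "odd v" "n+1 < v" | "even v" "v < n" | "v = n"
      | "even v" "n < v" "v < N" | "v = N"
    proof -
      have vb: "1 \<le> v" "v \<le> N" using v by auto
      have "(odd v \<and> v < n) \<or> v = n+1 \<or> (odd v \<and> n+1 < v) \<or> (even v \<and> v < n) \<or> v = n
        \<or> (even v \<and> n < v \<and> v < N) \<or> v = N" using vb Nn k by presburger
      then show ?thesis using that by blast
    qed
    then show ?thesis
    proof cases
      case 1
      then have "qO v = v + n - 1" unfolding qO_def up_def using Nn by simp
      moreover have "v \<in> Od" unfolding Od_def using 1 by simp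
      ultimately show ?thesis using e X2_A by simp
    next
      case 2
      then have "odd v" using k by simp
      then have "qO v = N" unfolding qO_def up_def using 2 Nn by simp
      then show ?thesis using e X2_C 2 by simp
    next
      case 3
      have "\<not> v + n - 1 \<le> N" using 3 vb' Nn k by presburger
      then have q: "qO v = v - n - 1" unfolding qO_def up_def using 3 Nn by simp
      have a: "v - n \<in> Od3" unfolding Od3_def mem_Collect_eq using 3 vb' Nn k by presburger
      have "e = {(v-n)-1, (v-n)+n}" using e q 3 v by auto
      then show ?thesis using X2_B[OF a] by simp
    next
      case 4
      then have q: "qO v = v + n + 1" unfolding qO_def dn_def by simp
      have a: "v + 1 \<in> Od3" unfolding Od3_def mem_Collect_eq using 4 vb' Nn k by presburger
      have "e = {(v+1)-1, (v+1)+n}" using e q 4 by auto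
      then show ?thesis using X2_B[OF a] by simp
    next
      case 5
      then have "even v" using ev by simp
      then have q: "qO v = 1" unfolding qO_def dn_def using 5 by simp
      have a: "1 \<in> Od" unfolding Od_def using n2 by simp
      have "e = {1, 1+n-1}" using e q 5 by auto
      then show ?thesis using X2_A[OF a] by simp
    next
      case 6
      then have q: "qO v = v - n + 1" unfolding qO_def dn_def by simp
      have a: "v - n + 1 \<in> Od" unfolding Od_def mem_Collect_eq using 6 vb' Nn k by presburger
      have "e = {v - n + 1, (v - n + 1) + n - 1}" using e q 6 by auto
      then show ?thesis using X2_A[OF a] by simp
    next
      case 7
      then have "even v" using Nn by simp
      then have q: "qO v = n + 1" unfolding qO_def dn_def using 7 Nn by simp
      have "e = {n+1, N}" using e q 7 by auto
      then show ?thesis using X2_C by simp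
    qed
  qed
next
  fix e assume "e \<in> X2"
  then show "e \<in> H qO"
  proof (rule X2_E)
    fix k assume "1 \<le> k" "k \<le> n" "e = {k,k+n}"
    then show ?thesis using H_D Dia_mem by simp
  next
    fix a assume a: "a \<in> Od" "e = {a,a+n-1}"
    have ao: "odd a" "a < n" using a(1) unfolding Od_def by auto
    then have "qO a = a+n-1" "a \<in> {1..N}" unfolding qO_def up_def using Nn by (auto simp: odd_pos Suc_le_eq)
    then show ?thesis using H_I[of a qO] a by simp
  next
    fix a assume a: "a \<in> Od3" "e = {a-1,a+n}"
    have ao: "odd a" "1 < a" "a < n" using a(1) unfolding Od3_def by auto
    then have "even (a-1)" by simp
    then have "qO (a-1) = a+n" "a-1 \<in> {1..N}" unfolding qO_def dn_def using ao Nn by auto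
    then show ?thesis using H_I[of "a-1" qO] a by simp
  next
    assume e: "e = {n+1,N}"
    have "odd (n+1)" using ev by simp
    then have "qO (n+1) = N" "n+1 \<in> {1..N}" unfolding qO_def up_def using Nn n2 by auto
    then show ?thesis using H_I[of "n+1" qO] e by simp
  qed
qed


lemma Od_E: "a \<in> Od \<Longrightarrow> odd a \<and> 1 \<le> a \<and> a < n"
  unfolding Od_def by (auto simp: odd_pos Suc_le_eq)
lemma Od3_E: "a \<in> Od3 \<Longrightarrow> odd a \<and> 3 \<le> a \<and> a < n"
  unfolding Od3_def mem_Collect_eq by presburger

lemma NC_X1_D:
  assumes k: "1 \<le> k" "k \<le> n" shows "NC X1 {k,k+n} = {}"
proof (rule NC_empty)
  fix f assume f: "f \<in> X1" "f \<inter> {k,k+n} = {}"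
  have kk: "k < k+n" using n2 by simp
  show "cross {k,k+n} f"
  proof (rule X1_E[OF f(1)])
    fix k' assume "1 \<le> k'" "k' \<le> n" "f = {k',k'+n}"
    then show ?thesis using f(2) k kk by (simp add: cross2; arith?)
  next
    fix a assume a: "a \<in> Od" "f = {a,a+n+1}"
    then show ?thesis using Od_E[OF a(1)] f(2) k kk by (simp add: cross2; arith?)
  next
    fix a assume a: "a \<in> Od" "f = {a+1,a+n}"
    then show ?thesis using Od_E[OF a(1)] f(2) k kk by (simp add: cross2; arith?)
  qed
qed

lemma NC_X1_A:
  assumes a: "a \<in> Od" shows "NC X1 {a,a+n+1} = {{a+1,a+n}}"
proof (rule NC_single)
  have ao: "odd a" "1 \<le> a" "a < n" using Od_E[OF a] by auto
  have aa: "a < a+n+1" by simp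
  show "{a+1,a+n} \<in> X1" using X1_B[OF a] .
  show "{a+1,a+n} \<inter> {a,a+n+1} = {}" using ao n2 by auto
  show "\<not> cross {a,a+n+1} {a+1,a+n}" using ao n2 by (simp add: cross2)
  fix f assume f: "f \<in> X1" "f \<inter> {a,a+n+1} = {}" "\<not> cross {a,a+n+1} f"
  show "f = {a+1,a+n}"
  proof (rule X1_E[OF f(1)])
    fix k' assume "1 \<le> k'" "k' \<le> n" "f = {k',k'+n}"
    then show ?thesis using f(2,3) ao n2 by (simp add: cross2; arith?)
  next
    fix b assume b: "b \<in> Od" "f = {b,b+n+1}"
    have bo: "odd b" "1 \<le> b" "b < n" using Od_E[OF b(1)] by auto
    have "a \<noteq> b" using f(2) b(2) by auto
    then have "a + 2 \<le> b \<or> b + 2 \<le> a" using odd2 ao bo by blast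
    then show ?thesis using b(2) f(3) ao bo n2 by (simp add: cross2; arith?)
  next
    fix b assume b: "b \<in> Od" "f = {b+1,b+n}"
    have bo: "odd b" "1 \<le> b" "b < n" using Od_E[OF b(1)] by auto
    show ?thesis
    proof (cases "a = b")
      case True then show ?thesis using b by simp
    next
      case False
      then have "a + 2 \<le> b \<or> b + 2 \<le> a" using odd2 ao bo by blast
      then show ?thesis using b(2) f(3) ao bo n2 by (simp add: cross2; arith?)
    qed
  qed
qed

lemma NC_X1_B:
  assumes a: "a \<in> Od" shows "NC X1 {a+1,a+n} = {{a,a+n+1}}"
proof (rule NC_single)
  have ao: "odd a" "1 \<le> a" "a < n" using Od_E[OF a] by auto
  show "{a,a+n+1} \<in> X1" using X1_A[OF a] .
  show "{a,a+n+1} \<inter> {a+1,a+n} = {}" using ao n2 by auto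
  show "\<not> cross {a+1,a+n} {a,a+n+1}" using ao n2 by (simp add: cross2)
  fix f assume f: "f \<in> X1" "f \<inter> {a+1,a+n} = {}" "\<not> cross {a+1,a+n} f"
  show "f = {a,a+n+1}"
  proof (rule X1_E[OF f(1)])
    fix k' assume "1 \<le> k'" "k' \<le> n" "f = {k',k'+n}"
    then show ?thesis using f(2,3) ao n2 by (simp add: cross2; arith?)
  next
    fix b assume b: "b \<in> Od" "f = {b,b+n+1}"
    have bo: "odd b" "1 \<le> b" "b < n" using Od_E[OF b(1)] by auto
    show ?thesis
    proof (cases "a = b")
      case True then show ?thesis using b by simp
    next
      case False
      then have "a + 2 \<le> b \<or> b + 2 \<le> a" using odd2 ao bo by blast
      then show ?thesis using b(2) f(3) ao bo n2 by (simp add: cross2; arith?)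
    qed
  next
    fix b assume b: "b \<in> Od" "f = {b+1,b+n}"
    have bo: "odd b" "1 \<le> b" "b < n" using Od_E[OF b(1)] by auto
    have "a \<noteq> b" using f(2) b(2) by auto
    then have "a + 2 \<le> b \<or> b + 2 \<le> a" using odd2 ao bo by blast
    then show ?thesis using b(2) f(3) ao bo n2 by (simp add: cross2; arith?)
  qed
qed


lemma NC_X2_D:
  assumes k: "1 \<le> k" "k \<le> n" shows "NC X2 {k,k+n} = {}"
proof (rule NC_empty)
  fix f assume f: "f \<in> X2" "f \<inter> {k,k+n} = {}"
  have kk: "k < k+n" using n2 by simp
  show "cross {k,k+n} f"
  proof (rule X2_E[OF f(1)])
    fix k' assume k': "1 \<le> k'" "k' \<le> n" "f = {k',k'+n}"
    have lt: "k' < k'+n" using n2 by simp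
    have dj: "k' \<noteq> k" using f(2) k'(3) by auto
    show ?thesis unfolding k'(3) by (rule crossI[OF kk lt]) (use dj k k' in arith)
  next
    fix a assume a: "a \<in> Od" "f = {a,a+n-1}"
    have lt: "a < a+n-1" using n2 by simp
    have ao: "odd a \<and> 1 \<le> a \<and> a < n" using Od_E[OF a(1)] .
    have dj: "a \<noteq> k \<and> a \<noteq> k+n \<and> a+n-1 \<noteq> k \<and> a+n-1 \<noteq> k+n" using f(2) a(2) by auto
    show ?thesis unfolding a(2) by (rule crossI[OF kk lt]) (use ao dj k n2 in arith)
  next
    fix a assume a: "a \<in> Od3" "f = {a-1,a+n}"
    have lt: "a-1 < a+n" using n2 by simp
    have ao: "odd a \<and> 3 \<le> a \<and> a < n" using Od3_E[OF a(1)] .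
    have dj: "a-1 \<noteq> k \<and> a-1 \<noteq> k+n \<and> a+n \<noteq> k \<and> a+n \<noteq> k+n" using f(2) a(2) by auto
    show ?thesis unfolding a(2) by (rule crossI[OF kk lt]) (use ao dj k n2 in arith)
  next
    assume c: "f = {n+1,N}"
    have lt: "n+1 < N" using n2 Nn by simp
    have dj: "n+1 \<noteq> k+n \<and> N \<noteq> k+n" using f(2) c by auto
    show ?thesis unfolding c by (rule crossI[OF kk lt]) (use dj k n2 Nn in arith)
  qed
qed

lemma NC_X2_A:
  assumes a: "a \<in> Od" "a \<noteq> 1" shows "NC X2 {a,a+n-1} = {{a-1,a+n}}"
proof (rule NC_single)
  have ao: "odd a" "3 \<le> a" "a < n" using Od_E[OF a(1)] a(2) by presburger+
  have a3: "a \<in> Od3" unfolding Od3_def using ao by simp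
  have ll: "a < a+n-1" using n2 by simp
  show "{a-1,a+n} \<in> X2" using X2_B[OF a3] .
  show "{a-1,a+n} \<inter> {a,a+n-1} = {}" using ao n2 by auto
  show "\<not> cross {a,a+n-1} {a-1,a+n}"
  proof
    assume "cross {a,a+n-1} {a-1,a+n}"
    then show False using ao n2 ll by (subst (asm) cross2) auto
  qed
  fix f assume f: "f \<in> X2" "f \<inter> {a,a+n-1} = {}" "\<not> cross {a,a+n-1} f"
  show "f = {a-1,a+n}"
  proof (rule X2_E[OF f(1)])
    fix k' assume k': "1 \<le> k'" "k' \<le> n" "f = {k',k'+n}"
    have lt: "k' < k'+n" using n2 by simp
    have dj: "a \<noteq> k' \<and> a \<noteq> k'+n \<and> a+n-1 \<noteq> k' \<and> a+n-1 \<noteq> k'+n" using f(2) k'(3) by auto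
    show ?thesis by (rule nc_contra[OF f(3) k'(3) refl ll lt]) (use ao dj k' n2 in arith)
  next
    fix b assume b: "b \<in> Od" "f = {b,b+n-1}"
    have bo: "odd b" "1 \<le> b" "b < n" using Od_E[OF b(1)] by auto
    have lt: "b < b+n-1" using n2 by simp
    have "a \<noteq> b" using f(2) b(2) by auto
    have sep: "a + 2 \<le> b \<or> b + 2 \<le> a" using odd2[of a b] ao(1) bo(1) \<open>a \<noteq> b\<close> by blast
    show ?thesis by (rule nc_contra[OF f(3) b(2) refl ll lt]) (use sep ao bo n2 in arith)
  next
    fix b assume b: "b \<in> Od3" "f = {b-1,b+n}"
    have bo: "odd b" "3 \<le> b" "b < n" using Od3_E[OF b(1)] by auto
    have lt: "b-1 < b+n" using n2 by simp
    show ?thesis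
    proof (cases "a = b")
      case True then show ?thesis using b by simp
    next
      case False
      have sep: "a + 2 \<le> b \<or> b + 2 \<le> a" using odd2[of a b] ao(1) bo(1) \<open>a \<noteq> b\<close> by blast
      show ?thesis by (rule nc_contra[OF f(3) b(2) refl ll lt]) (use sep ao bo n2 in arith)
    qed
  next
    assume c: "f = {n+1,N}"
    have lt: "n+1 < N" using n2 Nn by simp
    show ?thesis by (rule nc_contra[OF f(3) c refl ll lt]) (use ao n2 Nn in arith)
  qed
qed

lemma NC_X2_A1: "NC X2 {1,n} = {{n+1,N}}"
proof (rule NC_single)
  have nn: "1 < n" using n2 by simp
  show "{n+1,N} \<in> X2" using X2_C .
  show "{n+1,N} \<inter> {1,n} = {}" using n2 Nn by auto
  show "\<not> cross {1,n} {n+1,N}"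
  proof
    assume "cross {1,n} {n+1,N}"
    then show False using n2 Nn nn by (subst (asm) cross2) auto
  qed
  fix f assume f: "f \<in> X2" "f \<inter> {1,n} = {}" "\<not> cross {1,n} f"
  show "f = {n+1,N}"
  proof (rule X2_E[OF f(1)])
    fix k' assume k': "1 \<le> k'" "k' \<le> n" "f = {k',k'+n}"
    have dj: "k' \<noteq> 1 \<and> k' \<noteq> n" using f(2) k'(3) by auto
    have lt: "k' < k'+n" using n2 by simp
    show ?thesis by (rule nc_contra[OF f(3) k'(3) refl nn lt]) (use dj k' n2 in arith)
  next
    fix b assume b: "b \<in> Od" "f = {b,b+n-1}"
    have bo: "odd b" "1 \<le> b" "b < n" using Od_E[OF b(1)] by auto
    have lt: "b < b+n-1" using n2 by simp
    have "1 \<noteq> b" using f(2) b(2) by auto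
    have sep: "3 \<le> b" using bo \<open>1 \<noteq> b\<close> by presburger
    show ?thesis by (rule nc_contra[OF f(3) b(2) refl nn lt]) (use sep bo n2 in arith)
  next
    fix b assume b: "b \<in> Od3" "f = {b-1,b+n}"
    have bo: "odd b" "3 \<le> b" "b < n" using Od3_E[OF b(1)] by auto
    have lt: "b-1 < b+n" using n2 by simp
    show ?thesis by (rule nc_contra[OF f(3) b(2) refl nn lt]) (use bo n2 in arith)
  next
    assume "f = {n+1,N}" then show ?thesis .
  qed
qed

lemma NC_X2_B:
  assumes a: "a \<in> Od3" shows "NC X2 {a-1,a+n} = {{a,a+n-1}}"
proof (rule NC_single)
  have ao: "odd a" "3 \<le> a" "a < n" using Od3_E[OF a] by auto
  have a1: "a \<in> Od" unfolding Od_def using ao by simp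
  have ll: "a - 1 < a + n" using n2 by simp
  show "{a,a+n-1} \<in> X2" using X2_A[OF a1] .
  show "{a,a+n-1} \<inter> {a-1,a+n} = {}" using ao n2 by auto
  show "\<not> cross {a-1,a+n} {a,a+n-1}"
  proof
    assume "cross {a-1,a+n} {a,a+n-1}"
    then show False using ao n2 ll by (subst (asm) cross2) auto
  qed
  fix f assume f: "f \<in> X2" "f \<inter> {a-1,a+n} = {}" "\<not> cross {a-1,a+n} f"
  show "f = {a,a+n-1}"
  proof (rule X2_E[OF f(1)])
    fix k' assume k': "1 \<le> k'" "k' \<le> n" "f = {k',k'+n}"
    have lt: "k' < k'+n" using n2 by simp
    have dj: "a-1 \<noteq> k' \<and> a-1 \<noteq> k'+n \<and> a+n \<noteq> k' \<and> a+n \<noteq> k'+n" using f(2) k'(3) by auto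
    show ?thesis by (rule nc_contra[OF f(3) k'(3) refl ll lt]) (use ao dj k' n2 in arith)
  next
    fix b assume b: "b \<in> Od" "f = {b,b+n-1}"
    have bo: "odd b" "1 \<le> b" "b < n" using Od_E[OF b(1)] by auto
    have lt: "b < b+n-1" using n2 by simp
    show ?thesis
    proof (cases "a = b")
      case True then show ?thesis using b by simp
    next
      case False
      have sep: "a + 2 \<le> b \<or> b + 2 \<le> a" using odd2[of a b] ao(1) bo(1) \<open>a \<noteq> b\<close> by blast
      show ?thesis by (rule nc_contra[OF f(3) b(2) refl ll lt]) (use sep ao bo n2 in arith)
    qed
  next
    fix b assume b: "b \<in> Od3" "f = {b-1,b+n}"
    have bo: "odd b" "3 \<le> b" "b < n" using Od3_E[OF b(1)] by auto
    have lt: "b-1 < b+n" using n2 by simp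
    have "a \<noteq> b" using f(2) b(2) by auto
    have sep: "a + 2 \<le> b \<or> b + 2 \<le> a" using odd2[of a b] ao(1) bo(1) \<open>a \<noteq> b\<close> by blast
    show ?thesis by (rule nc_contra[OF f(3) b(2) refl ll lt]) (use sep ao bo n2 in arith)
  next
    assume c: "f = {n+1,N}"
    have lt: "n+1 < N" using n2 Nn by simp
    show ?thesis by (rule nc_contra[OF f(3) c refl ll lt]) (use ao n2 Nn in arith)
  qed
qed

lemma NC_X2_C: "NC X2 {n+1,N} = {{1,n}}"
proof (rule NC_single)
  have ll: "n+1 < N" using n2 Nn by simp
  have a1: "1 \<in> Od" unfolding Od_def using n2 by simp
  show "{1,n} \<in> X2" using X2_A[OF a1] by simp
  show "{1,n} \<inter> {n+1,N} = {}" using n2 Nn by auto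
  show "\<not> cross {n+1,N} {1,n}"
  proof
    assume "cross {n+1,N} {1,n}"
    then show False using n2 Nn ll by (subst (asm) cross2) auto
  qed
  fix f assume f: "f \<in> X2" "f \<inter> {n+1,N} = {}" "\<not> cross {n+1,N} f"
  show "f = {1,n}"
  proof (rule X2_E[OF f(1)])
    fix k' assume k': "1 \<le> k'" "k' \<le> n" "f = {k',k'+n}"
    have dj: "k' \<noteq> 1 \<and> k' \<noteq> n" using f(2) k'(3) Nn by auto
    have lt: "k' < k'+n" using n2 by simp
    show ?thesis by (rule nc_contra[OF f(3) k'(3) refl ll lt]) (use dj k' n2 Nn in arith)
  next
    fix b assume b: "b \<in> Od" "f = {b,b+n-1}"
    have bo: "odd b" "1 \<le> b" "b < n" using Od_E[OF b(1)] by auto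
    have lt: "b < b+n-1" using n2 by simp
    show ?thesis
    proof (cases "b = 1")
      case True then show ?thesis using b by simp
    next
      case False
      have sep: "3 \<le> b" using bo False by presburger
      show ?thesis by (rule nc_contra[OF f(3) b(2) refl ll lt]) (use sep bo n2 Nn in arith)
    qed
  next
    fix b assume b: "b \<in> Od3" "f = {b-1,b+n}"
    have bo: "odd b" "3 \<le> b" "b < n" using Od3_E[OF b(1)] by auto
    have lt: "b-1 < b+n" using n2 by simp
    show ?thesis by (rule nc_contra[OF f(3) b(2) refl ll lt]) (use bo n2 Nn in arith)
  next
    assume "f = {n+1,N}" then show ?thesis using f(2) by simp
  qed
qed

end





context BF begin

lemma sum_nc:
  assumes tf: "two_factor N X" and DX: "Dia \<subseteq> X" and d0: "\<And>e. e \<in> Dia \<Longrightarrow> NC X e = {}"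
    and m1: "\<And>e. e \<in> X - Dia \<Longrightarrow> card (NC X e) = 1"
  shows "(\<Sum>e\<in>X. card (NC X e)) = n"
proof -
  have fin: "finite X" using tf_finite[OF tf] .
  have "(\<Sum>e\<in>X. card (NC X e)) = (\<Sum>e\<in>X \<inter> Dia. card (NC X e)) + (\<Sum>e\<in>X - Dia. card (NC X e))"
    using fin by (simp add: sum.Int_Diff)
  also have "(\<Sum>e\<in>X \<inter> Dia. card (NC X e)) = 0" using d0 by simp
  also have "(\<Sum>e\<in>X - Dia. card (NC X e)) = (\<Sum>e\<in>X - Dia. 1)" using m1 by simp
  also have "\<dots> = card (X - Dia)" by simp
  also have "\<dots> = card X - card Dia" using DX finite_Dia by (simp add: card_Diff_subset)
  finally show ?thesis using tf_card[OF tf] card_Dia Nn by simp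
qed

lemma tf_X1: "two_factor N X1" using tf_H[of qE] HE_X1 by simp
lemma tf_X2: "two_factor N X2" using tf_H[of qO] HO_X2 by simp

lemma sum_X1: "(\<Sum>e\<in>X1. card (NC X1 e)) = n"
proof (rule sum_nc[OF tf_X1])
  show "Dia \<subseteq> X1" unfolding X1_def by blast
  show "NC X1 e = {}" if "e \<in> Dia" for e
    using that by (rule Dia_E) (simp add: NC_X1_D)
  show "card (NC X1 e) = 1" if e: "e \<in> X1 - Dia" for e
  proof (rule X1_E[of e])
    show "e \<in> X1" using e by simp
    fix k assume "1 \<le> k" "k \<le> n" "e = {k,k+n}"
    then show ?thesis using e Dia_mem by simp
  next
    fix a assume "a \<in> Od" "e = {a,a+n+1}"
    then show ?thesis using NC_X1_A by simp
  next
    fix a assume "a \<in> Od" "e = {a+1,a+n}"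
    then show ?thesis using NC_X1_B by simp
  qed
qed

lemma sum_X2: "(\<Sum>e\<in>X2. card (NC X2 e)) = n"
proof (rule sum_nc[OF tf_X2])
  show "Dia \<subseteq> X2" unfolding X2_def by blast
  show "NC X2 e = {}" if "e \<in> Dia" for e
    using that by (rule Dia_E) (simp add: NC_X2_D)
  show "card (NC X2 e) = 1" if e: "e \<in> X2 - Dia" for e
  proof (rule X2_E[of e])
    show "e \<in> X2" using e by simp
    fix k assume "1 \<le> k" "k \<le> n" "e = {k,k+n}"
    then show ?thesis using e Dia_mem by simp
  next
    fix a assume a: "a \<in> Od" "e = {a,a+n-1}"
    show ?thesis
    proof (cases "a = 1")
      case True then show ?thesis using a NC_X2_A1 by simp
    next
      case False then show ?thesis using a NC_X2_A by simp
    qed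
  next
    fix a assume "a \<in> Od3" "e = {a-1,a+n}"
    then show ?thesis using NC_X2_B by simp
  next
    assume "e = {n+1,N}"
    then show ?thesis using NC_X2_C by simp
  qed
qed

lemma char:
  assumes tf: "two_factor N F" and s: "(\<Sum>e\<in>F. card (NC F e)) = n"
  shows "F = h1 N \<or> F = h2 N"
proof -
  interpret BFS N n F
    using nc_eq[OF tf s] tf by unfold_locales auto
  show ?thesis using F_H HE_X1 HO_X2 h1_X1 h2_X2 by auto
qed

end





theorem propositionB1:
  fixes N :: nat and r :: "nat \<Rightarrow> real"
  assumes "N \<ge> 4" and "4 dvd N"
    and "\<forall>i\<in>{1..N}. 0 \<le> r i \<and> r i \<le> 1"
    and "\<forall>i\<in>{1..N}. \<forall>j\<in>{1..N}. i < j \<longrightarrow> r i < r j"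
  shows "{F. two_factor N F \<and> (\<forall>G. two_factor N G \<longrightarrow> crossings G \<le> crossings F)}
           = {h1 N, h2 N}"
proof -
  obtain m where m: "N = 4*m" using assms(2) by blast
  define n where "n = 2*m"
  interpret BF N n using assms(1) m unfolding n_def by unfold_locales auto
  define S where "S G = (\<Sum>e\<in>G. card (NC G e))" for G
  have id: "2 * crossings G + S G + 3*N = N*N" if "two_factor N G" for G
    using cross_identity[OF that] unfolding S_def .
  have lb: "n \<le> S G" if "two_factor N G" for G
    using nc_bound[OF that] unfolding S_def .
  have h1: "two_factor N (h1 N)" "S (h1 N) = n" using tf_X1 sum_X1 h1_X1 unfolding S_def by auto
  have h2: "two_factor N (h2 N)" "S (h2 N) = n" using tf_X2 sum_X2 h2_X2 unfolding S_def by auto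
  show ?thesis
  proof (rule set_eqI, rule iffI)
    fix F assume "F \<in> {F. two_factor N F \<and> (\<forall>G. two_factor N G \<longrightarrow> crossings G \<le> crossings F)}"
    then have tf: "two_factor N F" and mx: "\<And>G. two_factor N G \<Longrightarrow> crossings G \<le> crossings F"
      by auto
    have "crossings (h1 N) \<le> crossings F" using mx h1(1) .
    then have "S F \<le> n" using id[OF tf] id[OF h1(1)] h1(2) by linarith
    then have "S F = n" using lb[OF tf] by simp
    then have "F = h1 N \<or> F = h2 N" using char[OF tf] unfolding S_def by blast
    then show "F \<in> {h1 N, h2 N}" by blast
  next
    fix F assume "F \<in> {h1 N, h2 N}"
    then have tf: "two_factor N F" and sF: "S F = n" using h1 h2 by auto
    have "crossings G \<le> crossings F" if G: "two_factor N G" for G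
      using id[OF G] id[OF tf] lb[OF G] sF by linarith
    then show "F \<in> {F. two_factor N F \<and> (\<forall>G. two_factor N G \<longrightarrow> crossings G \<le> crossings F)}"
      using tf by blast
  qed
qed



end
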